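(* Let $N$ be a finite set and $f: 2^{N} \to \mathbb{R} \cup \{-\infty\}$ with $\mathrm{dom}\, f \neq \emptyset$, and suppose that $\mathrm{dom}\, f$ satisfies (B$^\natural$-EXC). If $f$ satisfies (M$^\natural$-EXC$_{\rm m}$), then $f$ satisfies (M$^\natural$-EXC).
   Context: $\mathrm{dom}\, f = \{X \subseteq N : f(X) > -\infty\}$. Notation: $X - i = X \setminus \{i\}$, $Y + i = Y \cup \{i\}$, $X - i + j = (X\setminus\{i\})\cup\{j\}$, $Y + i - j = (Y \cup\{i\})\setminus\{j\}$. Conventions: $(-\infty)+a=a+(-\infty)=(-\infty)+(-\infty)=-\infty$ for $a \in\mathbb{R}$, $-\infty\le-\infty$, max over empty set is $-\infty$. (B$^\natural$-EXC) for $\mathcal{F}\subseteq 2^N$: for any $X, Y \in \mathcal{F}$ and $i \in X\setminus Y$, either $X - i, Y + i \in \mathcal{F}$, or there exists $j \in Y\setminus X$ with $X - i + j, Y + i - j \in \mathcal{F}$. (M$^\natural$-EXC): for all $X,Y\subseteq N$, $i \in X\setminus Y$: $f(X)+f(Y) \le \max[ f(X-i)+f(Y+i), \max_{j\in Y\setminus X}\{f(X-i+j)+f(Y+i-j)\}]$. (M$^\natural$-EXC$_{\rm m}$): for all $X, Y \subseteq N$ and $I \subseteq X\setminus Y$ there is $J \subseteq Y\setminus X$ with $f(X)+f(Y) \le f((X\setminus I)\cup J)+f((Y\setminus J)\cup I)$. *)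

theory Defs
  imports "HOL-Library.Extended_Real"
begin

text \<open>Set functions f : 2^N -> R \<union> {-\<infinity>} are modelled as f :: 'a set \<Rightarrow> ereal
  with f X \<noteq> \<infinity>; only values on subsets of N matter.\<close>

definition valued_on :: "'a set \<Rightarrow> ('a set \<Rightarrow> ereal) \<Rightarrow> bool" where
  "valued_on N f \<longleftrightarrow> (\<forall>X. X \<subseteq> N \<longrightarrow> f X \<noteq> \<infinity>)"

definition dom_f :: "'a set \<Rightarrow> ('a set \<Rightarrow> ereal) \<Rightarrow> 'a set set" where
  "dom_f N f = {X. X \<subseteq> N \<and> f X > -\<infinity>}"

definition B_nat_EXC :: "'a set set \<Rightarrow> bool" where
  "B_nat_EXC F \<longleftrightarrow>
    (\<forall>X\<in>F. \<forall>Y\<in>F. \<forall>i\<in>X - Y.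
       (X - {i} \<in> F \<and> insert i Y \<in> F) \<or>
       (\<exists>j\<in>Y - X. insert j (X - {i}) \<in> F \<and> insert i Y - {j} \<in> F))"

definition M_nat_EXC :: "'a set \<Rightarrow> ('a set \<Rightarrow> ereal) \<Rightarrow> bool" where
  "M_nat_EXC N f \<longleftrightarrow>
    (\<forall>X Y. X \<subseteq> N \<longrightarrow> Y \<subseteq> N \<longrightarrow> (\<forall>i\<in>X - Y.
       f X + f Y \<le> max (f (X - {i}) + f (insert i Y))
                         (SUP j\<in>Y - X. f (insert j (X - {i})) + f (insert i Y - {j}))))"

definition M_nat_EXC_m :: "'a set \<Rightarrow> ('a set \<Rightarrow> ereal) \<Rightarrow> bool" where
  "M_nat_EXC_m N f \<longleftrightarrow>
    (\<forall>X Y. X \<subseteq> N \<longrightarrow> Y \<subseteq> N \<longrightarrow> (\<forall>I. I \<subseteq> X - Y \<longrightarrow>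
       (\<exists>J. J \<subseteq> Y - X \<and> f X + f Y \<le> f ((X - I) \<union> J) + f ((Y - J) \<union> I))))"

end

theory Submission
  imports Defs
begin

lemma E_lt:
  fixes a b y z t :: ereal
  assumes "y + t \<le> a + b" "a < y" "b \<le> z" "y \<noteq> -\<infinity>" "y \<noteq> \<infinity>" "z \<noteq> -\<infinity>" "z \<noteq> \<infinity>" "t \<noteq> \<infinity>"
  shows "t < z"
  using assms by (cases y; cases z; cases t; cases a; cases b) auto

lemma E_le:
  fixes a b y t :: ereal
  assumes "y + t \<le> a + b" "a \<le> y" "y \<noteq> -\<infinity>" "y \<noteq> \<infinity>" "t \<noteq> \<infinity>"
  shows "t \<le> b"
  using assms by (cases y; cases t; cases a; cases b) auto

lemma E_lt3:
  fixes a b y t :: ereal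
  assumes "y + t \<le> a + b" "a < y" "y \<noteq> -\<infinity>" "y \<noteq> \<infinity>" "t \<noteq> \<infinity>" "t \<noteq> -\<infinity>"
  shows "t < b"
  using assms by (cases y; cases t; cases a; cases b) auto

lemma E_sum_lt:
  fixes a b x y :: ereal
  assumes "a \<le> x" "b < y" "x \<noteq> -\<infinity>" "x \<noteq> \<infinity>" "y \<noteq> \<infinity>"
  shows "a + b < x + y"
  using assms by (cases x; cases y; cases a; cases b) auto

lemma E_cancel:
  fixes x t y :: ereal
  assumes "x + t < x + y" "x \<noteq> -\<infinity>" "x \<noteq> \<infinity>"
  shows "t < y"
  using assms by (cases x; cases y; cases t) auto

definition exc :: "('a set \<Rightarrow> ereal) \<Rightarrow> 'a set \<Rightarrow> 'a set \<Rightarrow> 'a \<Rightarrow> bool" where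
  "exc g X Y i \<longleftrightarrow> g X + g Y \<le> g (X - {i}) + g (insert i Y) \<or>
     (\<exists>j\<in>Y - X. g X + g Y \<le> g (insert j (X - {i})) + g (insert i Y - {j}))"

lemma finite_argmax:
  fixes g :: "'b \<Rightarrow> 'c::linorder"
  assumes "finite S" "S \<noteq> {}"
  shows "\<exists>x\<in>S. \<forall>y\<in>S. g y \<le> g x"
  using assms
proof (induction S rule: finite_ne_induct)
  case (singleton x) then show ?case by auto
next
  case (insert x F)
  then obtain z where z: "z \<in> F" "\<forall>y\<in>F. g y \<le> g z" by auto
  show ?case
  proof (cases "g x \<le> g z")
    case True then show ?thesis using z by auto
  next
    case False
    then have "g z \<le> g x" by simp
    then have "\<forall>y\<in>insert x F. g y \<le> g x" using z by (auto intro: order_trans)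
    then show ?thesis by blast
  qed
qed

lemma card_le2: "S \<subseteq> {a, b} \<Longrightarrow> card S \<le> 2"
proof -
  assume "S \<subseteq> {a, b}"
  then have "card S \<le> card {a, b}" by (intro card_mono) auto
  also have "\<dots> \<le> 2" by (simp add: card_insert_if)
  finally show ?thesis .
qed

lemma card_le1: "S \<subseteq> {a} \<Longrightarrow> card S \<le> 1"
  using card_mono[of "{a}" S] by simp

lemma E_lt':
  fixes a b y z t :: ereal
  assumes "y + t \<le> a + b" "a \<le> z" "b < y" "y \<noteq> -\<infinity>" "y \<noteq> \<infinity>" "z \<noteq> -\<infinity>" "z \<noteq> \<infinity>" "t \<noteq> \<infinity>"
  shows "t < z"
  using E_lt[of y t b a z] assms by (simp add: add.commute)

lemma E_lt3':
  fixes a b y t :: ereal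
  assumes "y + t \<le> a + b" "b < y" "y \<noteq> -\<infinity>" "y \<noteq> \<infinity>" "t \<noteq> \<infinity>" "t \<noteq> -\<infinity>"
  shows "t < a"
  using E_lt3[of y t b a] assms by (simp add: add.commute)

lemma E_le':
  fixes a b y t :: ereal
  assumes "y + t \<le> a + b" "b \<le> y" "y \<noteq> -\<infinity>" "y \<noteq> \<infinity>" "t \<noteq> \<infinity>"
  shows "t \<le> a"
  using E_le[of y t b a] assms by (simp add: add.commute)

lemma big:
  fixes g :: "'a set \<Rightarrow> ereal"
  assumes fin: "finite N" and XN: "X \<subseteq> N" and YN: "Y \<subseteq> N" and iP: "i \<in> X - Y"
    and ninf: "\<And>S. S \<subseteq> N \<Longrightarrow> g S \<noteq> \<infinity>"
    and IH: "\<And>X' Y' i'. X' \<subseteq> N \<Longrightarrow> Y' \<subseteq> N \<Longrightarrow> i' \<in> X' - Y' \<Longrightarrow>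
         card (X' - Y') + card (Y' - X') < card (X - Y) + card (Y - X) \<Longrightarrow> exc g X' Y' i'"
    and Q3: "3 \<le> card (Y - X)"
    and gX: "g X \<noteq> -\<infinity>" and gY: "g Y \<noteq> -\<infinity>"
    and nX0: "g (X - {i}) \<le> g X"
    and nXv: "\<And>v. v \<in> Y - X \<Longrightarrow> g (insert v (X - {i})) \<le> g X"
    and N1: "\<And>j. j \<in> Y - X \<Longrightarrow> g (insert i Y - {j}) < g Y"
    and N2: "g (insert i Y) < g Y"
    and modeb: "X - Y = {i} \<Longrightarrow> \<forall>j\<in>Y - X. g Y + g X \<le> g (Y - {j}) + g (insert j X)"
    and domex: "\<And>u. u \<in> X - Y - {i} \<Longrightarrow> g (insert u Y) \<noteq> -\<infinity> \<or> (\<exists>k\<in>Y - X. g (insert u (Y - {k})) \<noteq> -\<infinity>)"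
  shows False
proof -
  define n where "n = card (X - Y) + card (Y - X)"
  have finX: "finite X" and finY: "finite Y" using fin XN YN finite_subset by auto
  have gXf: "g X \<noteq> \<infinity>" using ninf XN by auto
  have gYf: "g Y \<noteq> \<infinity>" using ninf YN by auto
  have P1: "1 \<le> card (X - Y)"
  proof -
    have "X - Y \<noteq> {}" using iP by auto
    then show ?thesis using finX by (simp add: Suc_le_eq card_gt_0_iff)
  qed
  have n4: "4 \<le> n" using P1 Q3 n_def by simp
  have IHn: "\<And>X' Y' i'. X' \<subseteq> N \<Longrightarrow> Y' \<subseteq> N \<Longrightarrow> i' \<in> X' - Y' \<Longrightarrow>
         card (X' - Y') + card (Y' - X') < n \<Longrightarrow> exc g X' Y' i'" using IH n_def by auto
  have key: False if a: "Y'' \<subseteq> N" "i \<notin> Y''" "Y'' - X \<subseteq> Y - X"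
      "card (X - Y'') + card (Y'' - X) < n" "g Y'' \<noteq> -\<infinity>" "g (insert i Y'') < g Y''"
      "\<And>v. v \<in> Y'' - X \<Longrightarrow> g (insert i Y'' - {v}) < g Y''" for Y''
  proof -
    have ex: "exc g X Y'' i" using IHn[OF XN a(1)] iP a(2) a(4) by auto
    have fY'': "g Y'' \<noteq> \<infinity>" using ninf a(1) by auto
    show False
    proof (cases "g X + g Y'' \<le> g (X - {i}) + g (insert i Y'')")
      case True
      moreover have "g (X - {i}) + g (insert i Y'') < g X + g Y''"
        by (rule E_sum_lt[OF nX0 a(6) gX gXf fY''])
      ultimately show False by simp
    next
      case False
      then obtain j where j: "j \<in> Y'' - X" "g X + g Y'' \<le> g (insert j (X - {i})) + g (insert i Y'' - {j})"
        using ex unfolding exc_def by auto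
      have jQ: "j \<in> Y - X" using j(1) a(3) by auto
      have "g (insert j (X - {i})) + g (insert i Y'' - {j}) < g X + g Y''"
        by (rule E_sum_lt[OF nXv[OF jQ] a(7)[OF j(1)] gX gXf fY''])
      with j(2) show False by simp
    qed
  qed
  show False
  proof (cases "\<exists>v\<in>Y - X. g Y \<le> g (Y - {v})")
    case True
    have QnE: "Y - X \<noteq> {}" using True by auto
    obtain v' where v': "v' \<in> Y - X" "\<forall>v\<in>Y - X. g (Y - {v}) \<le> g (Y - {v'})"
      using finite_argmax[of "Y - X" "\<lambda>v. g (Y - {v})"] finY QnE by auto
    have ge: "g Y \<le> g (Y - {v'})"
    proof -
      from True obtain v where "v \<in> Y - X" "g Y \<le> g (Y - {v})" by auto
      then show ?thesis using v'(2) by (blast intro: order_trans)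
    qed
    show False
    proof (rule key[of "Y - {v'}"])
      show "Y - {v'} \<subseteq> N" using YN by auto
      show "i \<notin> Y - {v'}" using iP by auto
      show "Y - {v'} - X \<subseteq> Y - X" by auto
      have e1: "X - (Y - {v'}) = X - Y" using v' by auto
      have e2: "Y - {v'} - X = (Y - X) - {v'}" by auto
      have "card ((Y - X) - {v'}) < card (Y - X)" using v' finY by (intro card_Diff1_less) auto
      then show "card (X - (Y - {v'})) + card (Y - {v'} - X) < n" unfolding e1 e2 n_def by simp
      show "g (Y - {v'}) \<noteq> -\<infinity>" using ge gY by auto
      have "insert i (Y - {v'}) = insert i Y - {v'}" using iP v' by auto
      then show "g (insert i (Y - {v'})) < g (Y - {v'})" using N1[OF v'(1)] ge by auto
      fix v assume v: "v \<in> Y - {v'} - X"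
      define T where "T = insert i (Y - {v'}) - {v}"
      have TN: "T \<subseteq> N" using T_def YN iP XN by auto
      have vT: "v \<in> Y - T" using v T_def by auto
      have s1: "Y - T \<subseteq> {v, v'}" and s2: "T - Y \<subseteq> {i}" using T_def by auto
      have "card (Y - T) \<le> 2" "card (T - Y) \<le> 1" using card_le2[OF s1] card_le1[OF s2] by auto
      then have "card (Y - T) + card (T - Y) \<le> 3" by simp
      then have exT: "exc g Y T v" using IHn[OF YN TN vT] n4 by auto
      have TY: "T - Y = {i}" using T_def iP v by auto
      have gT: "g T \<noteq> \<infinity>" using ninf TN by auto
      have fY': "g (Y - {v'}) \<noteq> \<infinity>" using ninf[of "Y - {v'}"] YN by auto
      have fY'': "g (Y - {v'}) \<noteq> -\<infinity>" using ge gY by auto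
      have vQ: "v \<in> Y - X" using v by auto
      from exT consider (o1) "g Y + g T \<le> g (Y - {v}) + g (insert v T)"
        | (o2) "g Y + g T \<le> g (insert i (Y - {v})) + g (insert v T - {i})"
        unfolding exc_def TY by auto
      then show "g (insert i (Y - {v'}) - {v}) < g (Y - {v'})"
      proof cases
        case o1
        have "insert v T = insert i (Y - {v'})" using T_def v by auto
        moreover have "g (insert i (Y - {v'})) < g Y"
        proof -
          have "insert i (Y - {v'}) = insert i Y - {v'}" using iP v' by auto
          then show ?thesis using N1[OF v'(1)] by simp
        qed
        ultimately show ?thesis
          using E_lt'[OF o1 _ _ gY gYf fY'' fY' gT] v'(2) vQ T_def by auto
      next
        case o2
        have "insert v T - {i} = Y - {v'}" using T_def v iP by auto
        moreover have "insert i (Y - {v}) = insert i Y - {v}" using iP v by auto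
        ultimately show ?thesis
          using E_lt[OF o2 _ _ gY gYf fY'' fY' gT] N1[OF vQ] T_def by auto
      qed
    qed
  next
    case False
    then have ph2: "\<And>v. v \<in> Y - X \<Longrightarrow> g (Y - {v}) < g Y" by (meson not_le)
    show False
    proof (cases "X - Y = {i}")
      case True
      have mb: "\<forall>j\<in>Y - X. g Y + g X \<le> g (Y - {j}) + g (insert j X)" using modeb True by auto
      have up: "g X < g (insert j X)" if j: "j \<in> Y - X" for j
      proof -
        have "g Y + g X \<le> g (Y - {j}) + g (insert j X)" using mb j by auto
        then show ?thesis using E_lt3[OF _ ph2[OF j] gY gYf gXf gX] by auto
      qed
      have QnE: "Y - X \<noteq> {}"
      proof
        assume "Y - X = {}"
        with Q3 show False by simp
      qed
      obtain j where j: "j \<in> Y - X" "\<forall>k\<in>Y - X. g (insert k X) \<le> g (insert j X)"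
        using finite_argmax[of "Y - X" "\<lambda>k. g (insert k X)"] finY QnE by auto
      have jN: "insert j X \<subseteq> N" using j XN YN by auto
      have gjX: "g X < g (insert j X)" using up j by auto
      have gjf: "g (insert j X) \<noteq> \<infinity>" using ninf jN by auto
      have gjm: "g (insert j X) \<noteq> -\<infinity>" using gjX by auto
      have e1: "insert j X - Y = X - Y" using j by auto
      have e2: "Y - insert j X = (Y - X) - {j}" by auto
      have "card ((Y - X) - {j}) < card (Y - X)" using j finY by (intro card_Diff1_less) auto
      then have "card (insert j X - Y) + card (Y - insert j X) < n" unfolding e1 e2 n_def by simp
      then have exj: "exc g (insert j X) Y i" using IHn[OF jN YN] iP j by auto
      have ins1: "insert j X - {i} = insert j (X - {i})" using j iP by auto
      have a1: "g (insert j X - {i}) \<le> g X" using nXv[OF j(1)] ins1 by simp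
      from exj consider (o1) "g (insert j X) + g Y \<le> g (insert j X - {i}) + g (insert i Y)"
        | (o2) k where "k \<in> Y - X" "k \<noteq> j" "g (insert j X) + g Y \<le> g (insert k (insert j X - {i})) + g (insert i Y - {k})"
        unfolding exc_def by auto
      then show False
      proof cases
        case o1
        then have "g Y + g (insert j X) \<le> g (insert j X - {i}) + g (insert i Y)" by (simp add: add.commute)
        from E_lt'[OF this a1 N2 gY gYf gX gXf gjf] gjX show False by simp
      next
        case (o2 k)
        define B where "B = insert k (insert j X - {i})"
        have "g Y + g (insert j X) \<le> g B + g (insert i Y - {k})" using o2 B_def by (simp add: add.commute)
        from E_lt3'[OF this N1[OF o2(1)] gY gYf gjf gjm] have jB: "g (insert j X) < g B" .
        have BN: "B \<subseteq> N" using B_def o2 j XN YN by auto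
        have jB2: "j \<in> B - X" using B_def j iP by auto
        have s1: "B - X \<subseteq> {j, k}" and s2: "X - B \<subseteq> {i}" using B_def by auto
        have "card (B - X) \<le> 2" "card (X - B) \<le> 1" using card_le2[OF s1] card_le1[OF s2] by auto
        then have exB: "exc g B X j" using IHn[OF BN XN jB2] n4 by auto
        have XB: "X - B = {i}" using B_def iP o2 j by auto
        have gBf: "g B \<noteq> \<infinity>" using ninf BN by auto
        from exB consider (p1) "g B + g X \<le> g (B - {j}) + g (insert j X)"
          | (p2) "g B + g X \<le> g (insert i (B - {j})) + g (insert j X - {i})"
          unfolding exc_def XB by auto
        then show False
        proof cases
          case p1
          have "B - {j} = insert k (X - {i})" using B_def o2 j iP by auto
          then have "g (B - {j}) \<le> g X" using nXv[OF o2(1)] by simp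
          moreover have "g X + g B \<le> g (B - {j}) + g (insert j X)" using p1 by (simp add: add.commute)
          ultimately have "g B \<le> g (insert j X)" using E_le[OF _ _ gX gXf gBf] by blast
          with jB show False by simp
        next
          case p2
          have "insert i (B - {j}) = insert k X" using B_def o2 j iP by auto
          then have "g (insert i (B - {j})) \<le> g (insert j X)" using j(2) o2(1) by simp
          moreover have "g X + g B \<le> g (insert i (B - {j})) + g (insert j X - {i})" using p2 by (simp add: add.commute)
          ultimately have "g B \<le> g (insert j X)" using E_le'[OF _ a1 gX gXf gBf] order_trans by blast
          with jB show False by simp
        qed
      qed
    next
      case False
      then obtain u where u: "u \<in> X - Y - {i}" using iP by auto
      define C where "C = (\<lambda>(u, v). insert u (Y - {v})) ` ((X - Y - {i}) \<times> (Y - X)) \<union> (\<lambda>u. insert u Y) ` (X - Y - {i})"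
      have C1: "insert u' (Y - {v'}) \<in> C" if "u' \<in> X - Y - {i}" "v' \<in> Y - X" for u' v'
        using that unfolding C_def by force
      have C2: "insert u' Y \<in> C" if "u' \<in> X - Y - {i}" for u'
        using that unfolding C_def by force
      have finC: "finite C" unfolding C_def using finX finY by auto
      have CnE: "C \<noteq> {}" using C2[OF u] by auto
      obtain Y'' where Y'': "Y'' \<in> C" "\<forall>Z\<in>C. g Z \<le> g Y''"
        using finite_argmax[OF finC CnE, of g] by auto
      have gY''m: "g Y'' \<noteq> -\<infinity>"
      proof -
        from domex[OF u] obtain Z where "Z \<in> C" "g Z \<noteq> -\<infinity>" using C1[OF u] C2[OF u] by blast
        then show ?thesis using Y''(2) by (metis ereal_infty_less_eq(2))
      qed
      have P2: "2 \<le> card (X - Y)"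
      proof -
        have "{i, u} \<subseteq> X - Y" using u iP by auto
        then have "card {i, u} \<le> card (X - Y)" using finX by (intro card_mono) auto
        moreover have "card {i, u} = 2" using u by auto
        ultimately show ?thesis by simp
      qed
      have n5: "5 \<le> n" using P2 Q3 n_def by simp
      from Y''(1) consider (c1) u' v' where "u' \<in> X - Y - {i}" "v' \<in> Y - X" "Y'' = insert u' (Y - {v'})"
        | (c2) u' where "u' \<in> X - Y - {i}" "Y'' = insert u' Y"
        unfolding C_def by auto
      then show False
      proof cases
        case (c1 u' v')
        have Y''N: "Y'' \<subseteq> N" using c1 XN YN by auto
        have gY''f: "g Y'' \<noteq> \<infinity>" using ninf Y''N by auto
        have V2: "g (insert i Y'') < g Y''"
        proof -
          have iN: "insert i Y'' \<subseteq> N" using Y''N iP XN by auto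
          have s1: "insert i Y'' - Y \<subseteq> {u', i}" and s2: "Y - insert i Y'' \<subseteq> {v'}" using c1 by auto
          have "card (insert i Y'' - Y) \<le> 2" "card (Y - insert i Y'') \<le> 1" using card_le2[OF s1] card_le1[OF s2] by auto
          moreover have "i \<in> insert i Y'' - Y" using iP by auto
          ultimately have ex: "exc g (insert i Y'') Y i" using IHn[OF iN YN] n5 by auto
          have YY: "Y - insert i Y'' = {v'}" using c1 iP by auto
          have gf: "g (insert i Y'') \<noteq> \<infinity>" using ninf iN by auto
          from ex consider (o1) "g (insert i Y'') + g Y \<le> g (insert i Y'' - {i}) + g (insert i Y)"
            | (o2) "g (insert i Y'') + g Y \<le> g (insert v' (insert i Y'' - {i})) + g (insert i Y - {v'})"
            unfolding exc_def YY by auto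
          then show ?thesis
          proof cases
            case o1
            have "insert i Y'' - {i} = Y''" using c1 iP by auto
            with o1 have "g Y + g (insert i Y'') \<le> g Y'' + g (insert i Y)" by (simp add: add.commute)
            from E_lt'[OF this order_refl N2 gY gYf gY''m gY''f gf] show ?thesis .
          next
            case o2
            have "insert v' (insert i Y'' - {i}) = insert u' Y" using c1 iP by auto
            then have a: "g (insert v' (insert i Y'' - {i})) \<le> g Y''" using Y''(2) C2[OF c1(1)] by simp
            from o2 have "g Y + g (insert i Y'') \<le> g (insert v' (insert i Y'' - {i})) + g (insert i Y - {v'})" by (simp add: add.commute)
            from E_lt'[OF this a N1[OF c1(2)] gY gYf gY''m gY''f gf] show ?thesis .
          qed
        qed
        show False
        proof (rule key[of Y''])
          show "Y'' \<subseteq> N" by fact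
          show "i \<notin> Y''" using c1 iP by auto
          show "Y'' - X \<subseteq> Y - X" using c1 by auto
          have e1: "X - Y'' = (X - Y) - {u'}" using c1 by auto
          have e2: "Y'' - X = (Y - X) - {v'}" using c1 by auto
          have "card ((X - Y) - {u'}) < card (X - Y)" using c1 finX by (intro card_Diff1_less) auto
          moreover have "card ((Y - X) - {v'}) < card (Y - X)" using c1 finY by (intro card_Diff1_less) auto
          ultimately show "card (X - Y'') + card (Y'' - X) < n" unfolding e1 e2 n_def by simp
          show "g Y'' \<noteq> -\<infinity>" by fact
          show "g (insert i Y'') < g Y''" by fact
          fix v assume v: "v \<in> Y'' - X"
          have vQ: "v \<in> Y - X" "v \<noteq> v'" using v c1 by auto
          define T where "T = insert i Y'' - {v}"
          have TN: "T \<subseteq> N" using T_def Y''N iP XN by auto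
          have vT: "v \<in> Y - T" using vQ T_def by auto
          have s1: "Y - T \<subseteq> {v, v'}" and s2: "T - Y \<subseteq> {u', i}" using T_def c1 by auto
          have "card (Y - T) \<le> 2" "card (T - Y) \<le> 2" using card_le2[OF s1] card_le2[OF s2] by auto
          then have exT: "exc g Y T v" using IHn[OF YN TN vT] n5 by auto
          have TY: "T - Y = {u', i}" using T_def iP vQ c1 by auto
          have gT: "g T \<noteq> \<infinity>" using ninf TN by auto
          from exT consider (o1) "g Y + g T \<le> g (Y - {v}) + g (insert v T)"
            | (o2) "g Y + g T \<le> g (insert i (Y - {v})) + g (insert v T - {i})"
            | (o3) "g Y + g T \<le> g (insert u' (Y - {v})) + g (insert v T - {u'})"
            unfolding exc_def TY by auto
          then show "g (insert i Y'' - {v}) < g Y''"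
          proof cases
            case o1
            have "insert v T = insert i Y''" using T_def v by auto
            with o1 have "g Y + g T \<le> g (Y - {v}) + g (insert i Y'')" by simp
            from E_lt[OF this ph2[OF vQ(1)] less_imp_le[OF V2] gY gYf gY''m gY''f gT] show ?thesis using T_def by simp
          next
            case o2
            have "insert v T - {i} = Y''" using T_def v c1 iP by auto
            moreover have "insert i (Y - {v}) = insert i Y - {v}" using iP vQ by auto
            ultimately have "g Y + g T \<le> g (insert i Y - {v}) + g Y''" using o2 by simp
            from E_lt[OF this N1[OF vQ(1)] order_refl gY gYf gY''m gY''f gT] show ?thesis using T_def by simp
          next
            case o3
            have "insert v T - {u'} = insert i Y - {v'}" using T_def v c1 iP vQ by auto
            with o3 have o3': "g Y + g T \<le> g (insert u' (Y - {v})) + g (insert i Y - {v'})" by simp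
            have "g (insert u' (Y - {v})) \<le> g Y''" using Y''(2) C1[OF c1(1) vQ(1)] by simp
            from E_lt'[OF o3' this N1[OF c1(2)] gY gYf gY''m gY''f gT] show ?thesis using T_def by simp
          qed
        qed
      next
        case (c2 u')
        have Y''N: "Y'' \<subseteq> N" using c2 XN YN by auto
        have gY''f: "g Y'' \<noteq> \<infinity>" using ninf Y''N by auto
        have V2: "g (insert i Y'') < g Y''"
        proof -
          have iN: "insert i Y'' \<subseteq> N" using Y''N iP XN by auto
          have s1: "insert i Y'' - Y \<subseteq> {u', i}" and s2: "Y - insert i Y'' = {}" using c2 by auto
          have "card (insert i Y'' - Y) \<le> 2" using card_le2[OF s1] by auto
          moreover have "i \<in> insert i Y'' - Y" using iP by auto
          ultimately have ex: "exc g (insert i Y'') Y i" using IHn[OF iN YN] n5 s2 by auto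
          have gf: "g (insert i Y'') \<noteq> \<infinity>" using ninf iN by auto
          have "g (insert i Y'') + g Y \<le> g (insert i Y'' - {i}) + g (insert i Y)"
            using ex unfolding exc_def s2 by auto
          moreover have "insert i Y'' - {i} = Y''" using c2 iP by auto
          ultimately have "g Y + g (insert i Y'') \<le> g Y'' + g (insert i Y)" by (simp add: add.commute)
          from E_lt'[OF this order_refl N2 gY gYf gY''m gY''f gf] show ?thesis .
        qed
        show False
        proof (rule key[of Y''])
          show "Y'' \<subseteq> N" by fact
          show "i \<notin> Y''" using c2 iP by auto
          show "Y'' - X \<subseteq> Y - X" using c2 by auto
          have e1: "X - Y'' = (X - Y) - {u'}" using c2 by auto
          have e2: "Y'' - X = Y - X" using c2 by auto
          have "card ((X - Y) - {u'}) < card (X - Y)" using c2 finX by (intro card_Diff1_less) auto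
          then show "card (X - Y'') + card (Y'' - X) < n" unfolding e1 e2 n_def by simp
          show "g Y'' \<noteq> -\<infinity>" by fact
          show "g (insert i Y'') < g Y''" by fact
          fix v assume v: "v \<in> Y'' - X"
          have vQ: "v \<in> Y - X" using v c2 by auto
          define T where "T = insert i Y'' - {v}"
          have TN: "T \<subseteq> N" using T_def Y''N iP XN by auto
          have vT: "v \<in> Y - T" using vQ T_def by auto
          have s1: "Y - T \<subseteq> {v}" and s2: "T - Y \<subseteq> {u', i}" using T_def c2 by auto
          have "card (Y - T) \<le> 1" "card (T - Y) \<le> 2" using card_le1[OF s1] card_le2[OF s2] by auto
          then have exT: "exc g Y T v" using IHn[OF YN TN vT] n5 by auto
          have TY: "T - Y = {u', i}" using T_def iP vQ c2 by auto
          have gT: "g T \<noteq> \<infinity>" using ninf TN by auto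
          from exT consider (o1) "g Y + g T \<le> g (Y - {v}) + g (insert v T)"
            | (o2) "g Y + g T \<le> g (insert i (Y - {v})) + g (insert v T - {i})"
            | (o3) "g Y + g T \<le> g (insert u' (Y - {v})) + g (insert v T - {u'})"
            unfolding exc_def TY by auto
          then show "g (insert i Y'' - {v}) < g Y''"
          proof cases
            case o1
            have "insert v T = insert i Y''" using T_def v by auto
            with o1 have "g Y + g T \<le> g (Y - {v}) + g (insert i Y'')" by simp
            from E_lt[OF this ph2[OF vQ(1)] less_imp_le[OF V2] gY gYf gY''m gY''f gT] show ?thesis using T_def by simp
          next
            case o2
            have "insert v T - {i} = Y''" using T_def v c2 iP by auto
            moreover have "insert i (Y - {v}) = insert i Y - {v}" using iP vQ by auto
            ultimately have "g Y + g T \<le> g (insert i Y - {v}) + g Y''" using o2 by simp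
            from E_lt[OF this N1[OF vQ(1)] order_refl gY gYf gY''m gY''f gT] show ?thesis using T_def by simp
          next
            case o3
            have "insert v T - {u'} = insert i Y" using T_def v c2 iP vQ by auto
            with o3 have o3': "g Y + g T \<le> g (insert u' (Y - {v})) + g (insert i Y)" by simp
            have "g (insert u' (Y - {v})) \<le> g Y''" using Y''(2) C1[OF c2(1) vQ(1)] by simp
            from E_lt'[OF o3' this N2 gY gYf gY''m gY''f gT] show ?thesis using T_def by simp
          qed
        qed
      qed
    qed
  qed
qed

lemma shift_ineq:
  fixes gA gB gC gD :: ereal and a b c d :: real
  assumes "gA + gB \<le> gC + gD" "a + b = c + d"
  shows "(gA + ereal a) + (gB + ereal b) \<le> (gC + ereal c) + (gD + ereal d)"
proof -
  have l: "(gA + ereal a) + (gB + ereal b) = (gA + gB) + ereal (a + b)"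
    by (cases gA; cases gB) simp_all
  have r: "(gC + ereal c) + (gD + ereal d) = (gC + gD) + ereal (c + d)"
    by (cases gC; cases gD) simp_all
  show ?thesis unfolding l r using assms by (simp add: add_right_mono)
qed

lemma exc_shift:
  fixes g :: "'a set \<Rightarrow> ereal" and q :: "'a \<Rightarrow> real"
  assumes "finite X" "finite Y" "i \<in> X - Y" "exc g X Y i"
  shows "exc (\<lambda>S. g S + ereal (sum q S)) X Y i"
proof -
  from assms(4) consider (a) "g X + g Y \<le> g (X - {i}) + g (insert i Y)"
    | (b) j where "j \<in> Y - X" "g X + g Y \<le> g (insert j (X - {i})) + g (insert i Y - {j})"
    unfolding exc_def by auto
  then show ?thesis
  proof cases
    case a
    have "sum q X + sum q Y = sum q (X - {i}) + sum q (insert i Y)"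
      using assms(1-3) by (simp add: sum_diff1)
    then show ?thesis unfolding exc_def using shift_ineq[OF a] by blast
  next
    case (b j)
    have "sum q X + sum q Y = sum q (insert j (X - {i})) + sum q (insert i Y - {j})"
      using assms(1-3) b(1) by (auto simp add: sum_diff1)
    then show ?thesis unfolding exc_def using shift_ineq[OF b(2)] b(1) by blast
  qed
qed

lemma E_chain:
  fixes s z w x p q r :: ereal
  assumes "s \<le> z + w" "z + x \<le> p + q" "p + w \<le> r + x" "x \<noteq> -\<infinity>" "x \<noteq> \<infinity>"
  shows "s \<le> r + q"
proof -
  have "s + x \<le> (z + w) + x" using assms(1) by (rule add_right_mono)
  also have "\<dots> = (z + x) + w" by (simp add: ac_simps)
  also have "\<dots> \<le> (p + q) + w" using assms(2) by (rule add_right_mono)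
  also have "\<dots> = (p + w) + q" by (simp add: ac_simps)
  also have "\<dots> \<le> (r + x) + q" using assms(3) by (rule add_right_mono)
  also have "\<dots> = (r + q) + x" by (simp add: ac_simps)
  finally show ?thesis using assms(4,5) by (simp add: ereal_add_le_add_iff2)
qed

lemma lt_aux:
  fixes a :: ereal and w rY wY :: real
  assumes "a \<noteq> \<infinity>" "a \<noteq> -\<infinity> \<Longrightarrow> real_of_ereal a + w < rY + wY"
  shows "a + ereal w < ereal rY + ereal wY"
  using assms by (cases a) auto

lemma case3:
  fixes f :: "'a set \<Rightarrow> ereal"
  assumes fin: "finite N" and val: "valued_on N f" and bn: "B_nat_EXC (dom_f N f)"
    and mm: "M_nat_EXC_m N f"
    and XN: "X \<subseteq> N" and YN: "Y \<subseteq> N" and iP: "i \<in> X - Y"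
    and IH: "\<And>X' Y' i'. X' \<subseteq> N \<Longrightarrow> Y' \<subseteq> N \<Longrightarrow> i' \<in> X' - Y' \<Longrightarrow>
         card (X' - Y') + card (Y' - X') < card (X - Y) + card (Y - X) \<Longrightarrow> exc f X' Y' i'"
    and V0: "\<not> f X + f Y \<le> f (X - {i}) + f (insert i Y)"
    and Vj: "\<And>j. j \<in> Y - X \<Longrightarrow> \<not> f X + f Y \<le> f (insert j (X - {i})) + f (insert i Y - {j})"
    and fXm: "f X \<noteq> -\<infinity>" and fYm: "f Y \<noteq> -\<infinity>"
    and Q3: "3 \<le> card (Y - X)"
  shows False
proof -
  have finX: "finite X" and finY: "finite Y" using fin XN YN finite_subset by auto
  have ninf: "\<And>S. S \<subseteq> N \<Longrightarrow> f S \<noteq> \<infinity>" using val unfolding valued_on_def by auto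
  have fXi: "f X \<noteq> \<infinity>" and fYi: "f Y \<noteq> \<infinity>" using ninf XN YN by auto
  have mmX: "\<exists>J. J \<subseteq> Y' - X' \<and> f X' + f Y' \<le> f ((X' - I) \<union> J) + f ((Y' - J) \<union> I)"
    if "X' \<subseteq> N" "Y' \<subseteq> N" "I \<subseteq> X' - Y'" for X' Y' I
    using mm[unfolded M_nat_EXC_m_def, rule_format, OF that] .
  define Q0 where "Q0 = {j \<in> Y - X. f (insert j (X - {i})) \<noteq> -\<infinity>}"
  define z0 where "z0 = (f (X - {i}) \<noteq> -\<infinity>)"
  define rf where "rf = (\<lambda>S. real_of_ereal (f S))"
  define M where "M = 1 + (\<Sum>j\<in>Y - X. \<bar>rf (insert i Y - {j}) - rf Y\<bar>) + \<bar>rf (insert i Y) - rf Y\<bar>"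
  define c where "c = (if z0 then rf (X - {i}) - rf X else - M)"
  define q where "q = (\<lambda>x. if x = i then c else if x \<in> Q0 then c + rf X - rf (insert x (X - {i}))
                          else if x \<in> Y - X then c + M else 0)"
  define g where "g = (\<lambda>S. f S + ereal (sum q S))"
  have rX: "f X = ereal (rf X)" using fXm fXi unfolding rf_def by (cases "f X") auto
  have rY: "f Y = ereal (rf Y)" using fYm fYi unfolding rf_def by (cases "f Y") auto
  have Mge: "\<bar>rf (insert i Y - {j}) - rf Y\<bar> < M" if "j \<in> Y - X" for j
  proof -
    have "\<bar>rf (insert i Y - {j}) - rf Y\<bar> \<le> (\<Sum>j\<in>Y - X. \<bar>rf (insert i Y - {j}) - rf Y\<bar>)"
      by (rule member_le_sum) (use that finY in auto)
    moreover have "0 \<le> \<bar>rf (insert i Y) - rf Y\<bar>" by simp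
    ultimately show ?thesis unfolding M_def by linarith
  qed
  have Mge2: "\<bar>rf (insert i Y) - rf Y\<bar> < M"
  proof -
    have "0 \<le> (\<Sum>j\<in>Y - X. \<bar>rf (insert i Y - {j}) - rf Y\<bar>)" by (rule sum_nonneg) auto
    then show ?thesis unfolding M_def by linarith
  qed
  have qi: "q i = c" unfolding q_def by simp
  have qQ0: "q j = c + rf X - rf (insert j (X - {i}))" if "j \<in> Q0" for j
    using that iP unfolding q_def Q0_def by auto
  have qQ1: "q j = c + M" if "j \<in> Y - X" "j \<notin> Q0" for j
    using that iP unfolding q_def by auto
  define wX where "wX = sum q X"
  define wY where "wY = sum q Y"
  have gX: "g X = ereal (rf X + wX)" unfolding g_def wX_def rX by simp
  have gY: "g Y = ereal (rf Y + wY)" unfolding g_def wY_def rY by simp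
  have sX0: "sum q (X - {i}) = wX - c" using finX iP by (simp add: sum_diff1 wX_def qi)
  have sXv: "sum q (insert v (X - {i})) = q v + wX - c" if "v \<in> Y - X" for v
    using that finX sX0 by simp
  have sYj: "sum q (insert i Y - {j}) = c + wY - q j" if "j \<in> Y - X" for j
  proof -
    have "insert i Y - {j} = insert i (Y - {j})" using that iP by auto
    moreover have "sum q (insert i (Y - {j})) = q i + sum q (Y - {j})" using finY iP by simp
    ultimately show ?thesis using that finY by (simp add: sum_diff1 wY_def qi)
  qed
  have sYi: "sum q (insert i Y) = c + wY" using finY iP by (simp add: wY_def qi)
  have gY': "g Y = ereal (rf Y) + ereal wY" using gY by simp
  show False
  proof (rule big[of N X Y i g])
    show "finite N" "X \<subseteq> N" "Y \<subseteq> N" "i \<in> X - Y" by fact+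
    show "\<And>S. S \<subseteq> N \<Longrightarrow> g S \<noteq> \<infinity>"
    proof -
      fix S assume "S \<subseteq> N"
      then have "f S \<noteq> \<infinity>" using ninf by auto
      then show "g S \<noteq> \<infinity>" unfolding g_def by (cases "f S") auto
    qed
    show "exc g X' Y' i'" if "X' \<subseteq> N" "Y' \<subseteq> N" "i' \<in> X' - Y'"
      "card (X' - Y') + card (Y' - X') < card (X - Y) + card (Y - X)" for X' Y' i'
    proof -
      have "finite X'" "finite Y'" using that(1,2) fin finite_subset by auto
      from exc_shift[OF this that(3) IH[OF that], of q] show ?thesis unfolding g_def .
    qed
    show "3 \<le> card (Y - X)" by fact
    show "g X \<noteq> -\<infinity>" using gX by simp
    show "g Y \<noteq> -\<infinity>" using gY by simp
    show "g (X - {i}) \<le> g X"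
    proof (cases z0)
      case True
      have "f (X - {i}) = ereal (rf (X - {i}))" using True ninf[of "X - {i}"] XN
        unfolding z0_def rf_def by (cases "f (X - {i})") auto
      then show ?thesis using True sX0 by (simp add: g_def c_def rX wX_def)
    next
      case False
      then show ?thesis unfolding g_def z0_def by simp
    qed
    show "g (insert v (X - {i})) \<le> g X" if v: "v \<in> Y - X" for v
    proof (cases "v \<in> Q0")
      case True
      have "f (insert v (X - {i})) = ereal (rf (insert v (X - {i})))"
        using True ninf[of "insert v (X - {i})"] XN YN v
        unfolding Q0_def rf_def by (cases "f (insert v (X - {i}))") auto
      then show ?thesis using True sXv[OF v] qQ0[OF True] by (simp add: g_def rX wX_def)
    next
      case False
      then have "f (insert v (X - {i})) = -\<infinity>" using v unfolding Q0_def by auto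
      then show ?thesis unfolding g_def by simp
    qed
    show "g (insert i Y - {j}) < g Y" if j: "j \<in> Y - X" for j
    proof -
      have ni: "f (insert i Y - {j}) \<noteq> \<infinity>" using ninf[of "insert i Y - {j}"] YN iP XN by auto
      have "f (insert i Y - {j}) + ereal (c + wY - q j) < ereal (rf Y) + ereal wY"
      proof (rule lt_aux[OF ni])
        assume nm: "f (insert i Y - {j}) \<noteq> -\<infinity>"
        have fYj: "f (insert i Y - {j}) = ereal (rf (insert i Y - {j}))"
          using nm ni unfolding rf_def by (cases "f (insert i Y - {j})") auto
        show "real_of_ereal (f (insert i Y - {j})) + (c + wY - q j) < rf Y + wY"
        proof (cases "j \<in> Q0")
          case True
          have fXj: "f (insert j (X - {i})) = ereal (rf (insert j (X - {i})))"
            using True ninf[of "insert j (X - {i})"] XN YN j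
            unfolding Q0_def rf_def by (cases "f (insert j (X - {i}))") auto
          have "rf (insert j (X - {i})) + rf (insert i Y - {j}) < rf X + rf Y"
            using Vj[OF j] unfolding fXj fYj rX rY by simp
          then show ?thesis using qQ0[OF True] unfolding rf_def by simp
        next
          case False
          then show ?thesis using qQ1[OF j False] Mge[OF j] unfolding rf_def by (simp add: abs_less_iff)
        qed
      qed
      moreover have "g (insert i Y - {j}) = f (insert i Y - {j}) + ereal (c + wY - q j)"
        by (simp add: g_def sYj[OF j])
      ultimately show ?thesis using gY' by simp
    qed
    show "g (insert i Y) < g Y"
    proof -
      have ni: "f (insert i Y) \<noteq> \<infinity>" using ninf[of "insert i Y"] YN iP XN by auto
      have "f (insert i Y) + ereal (c + wY) < ereal (rf Y) + ereal wY"
      proof (rule lt_aux[OF ni])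
        assume nm: "f (insert i Y) \<noteq> -\<infinity>"
        have fYi': "f (insert i Y) = ereal (rf (insert i Y))"
          using nm ni unfolding rf_def by (cases "f (insert i Y)") auto
        show "real_of_ereal (f (insert i Y)) + (c + wY) < rf Y + wY"
        proof (cases z0)
          case True
          have fX0: "f (X - {i}) = ereal (rf (X - {i}))" using True ninf[of "X - {i}"] XN
            unfolding z0_def rf_def by (cases "f (X - {i})") auto
          have "rf (X - {i}) + rf (insert i Y) < rf X + rf Y"
            using V0 unfolding fX0 fYi' rX rY by simp
          then show ?thesis using True unfolding c_def rf_def by simp
        next
          case False
          then show ?thesis using Mge2 unfolding c_def rf_def by (simp add: abs_less_iff)
        qed
      qed
      moreover have "g (insert i Y) = f (insert i Y) + ereal (c + wY)"
        by (simp add: g_def sYi)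
      ultimately show ?thesis using gY' by simp
    qed
    show "\<forall>j\<in>Y - X. g Y + g X \<le> g (Y - {j}) + g (insert j X)" if P1: "X - Y = {i}"
    proof
      fix j assume j: "j \<in> Y - X"
      obtain K where K: "K \<subseteq> X - Y" "f Y + f X \<le> f ((Y - {j}) \<union> K) + f ((X - K) \<union> {j})"
        using mmX[OF YN XN, of "{j}"] j by auto
      have "K = {} \<or> K = {i}" using K(1) P1 by auto
      then have K0: "K = {}"
      proof
        assume Ki: "K = {i}"
        have "(Y - {j}) \<union> {i} = insert i Y - {j}" using j iP by auto
        moreover have "(X - {i}) \<union> {j} = insert j (X - {i})" by auto
        ultimately have "f X + f Y \<le> f (insert j (X - {i})) + f (insert i Y - {j})"
          using K(2) Ki by (simp add: add.commute)
        with Vj[OF j] show "K = {}" by simp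
      qed
      have fin1: "f Y + f X \<le> f (Y - {j}) + f (insert j X)" using K(2) K0 by simp
      have "sum q Y + sum q X = sum q (Y - {j}) + sum q (insert j X)"
        using j finX finY by (simp add: sum_diff1)
      from shift_ineq[OF fin1 this] show "g Y + g X \<le> g (Y - {j}) + g (insert j X)"
        unfolding g_def .
    qed
    show "g (insert u Y) \<noteq> -\<infinity> \<or> (\<exists>k\<in>Y - X. g (insert u (Y - {k})) \<noteq> -\<infinity>)"
      if u: "u \<in> X - Y - {i}" for u
    proof -
      have gm: "g S \<noteq> -\<infinity>" if "f S \<noteq> -\<infinity>" for S using that unfolding g_def by (cases "f S") auto
      have XD: "X \<in> dom_f N f" using XN fXm unfolding dom_f_def by auto
      have YD: "Y \<in> dom_f N f" using YN fYm unfolding dom_f_def by auto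
      have uXY: "u \<in> X - Y" using u by auto
      from bn[unfolded B_nat_EXC_def, rule_format, OF XD YD uXY]
      consider "insert u Y \<in> dom_f N f" | k where "k \<in> Y - X" "insert u Y - {k} \<in> dom_f N f" by blast
      then show ?thesis
      proof cases
        case 1 then show ?thesis using gm unfolding dom_f_def by auto
      next
        case (2 k)
        have "insert u Y - {k} = insert u (Y - {k})" using 2(1) u by auto
        then show ?thesis using 2 gm unfolding dom_f_def by auto
      qed
    qed
  qed
qed

lemma step:
  fixes f :: "'a set \<Rightarrow> ereal"
  assumes fin: "finite N" and val: "valued_on N f" and bn: "B_nat_EXC (dom_f N f)"
    and mm: "M_nat_EXC_m N f"
    and XN: "X \<subseteq> N" and YN: "Y \<subseteq> N" and iP: "i \<in> X - Y"
    and IH: "\<And>X' Y' i'. X' \<subseteq> N \<Longrightarrow> Y' \<subseteq> N \<Longrightarrow> i' \<in> X' - Y' \<Longrightarrow>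
         card (X' - Y') + card (Y' - X') < card (X - Y) + card (Y - X) \<Longrightarrow> exc f X' Y' i'"
  shows "exc f X Y i"
proof (rule ccontr)
  assume nex: "\<not> exc f X Y i"
  have V0: "\<not> f X + f Y \<le> f (X - {i}) + f (insert i Y)" using nex unfolding exc_def by auto
  have Vj: "\<And>j. j \<in> Y - X \<Longrightarrow> \<not> f X + f Y \<le> f (insert j (X - {i})) + f (insert i Y - {j})"
    using nex unfolding exc_def by auto
  have finX: "finite X" and finY: "finite Y" using fin XN YN finite_subset by auto
  have ninf: "\<And>S. S \<subseteq> N \<Longrightarrow> f S \<noteq> \<infinity>" using val unfolding valued_on_def by auto
  have fXi: "f X \<noteq> \<infinity>" and fYi: "f Y \<noteq> \<infinity>" using ninf XN YN by auto
  have fXm: "f X \<noteq> -\<infinity>"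
  proof
    assume a: "f X = -\<infinity>"
    have h: "f X + f Y = -\<infinity>" using a fYi by (cases "f Y") auto
    have "f X + f Y \<le> f (X - {i}) + f (insert i Y)" unfolding h by simp
    then show False using V0 by blast
  qed
  have fYm: "f Y \<noteq> -\<infinity>"
  proof
    assume a: "f Y = -\<infinity>"
    have h: "f X + f Y = -\<infinity>" using a fXi by (cases "f X") auto
    have "f X + f Y \<le> f (X - {i}) + f (insert i Y)" unfolding h by simp
    then show False using V0 by blast
  qed
  have mmX: "\<exists>J. J \<subseteq> Y' - X' \<and> f X' + f Y' \<le> f ((X' - I) \<union> J) + f ((Y' - J) \<union> I)"
    if "X' \<subseteq> N" "Y' \<subseteq> N" "I \<subseteq> X' - Y'" for X' Y' I
    using mm[unfolded M_nat_EXC_m_def, rule_format, OF that] .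
  obtain J0 where J0: "J0 \<subseteq> Y - X" "f X + f Y \<le> f ((X - {i}) \<union> J0) + f ((Y - J0) \<union> {i})"
    using mmX[OF XN YN, of "{i}"] iP by auto
  have finJ0: "finite J0" using J0(1) finY finite_subset by blast
  have J0c: "2 \<le> card J0"
  proof (rule ccontr)
    assume "\<not> 2 \<le> card J0"
    then have c1: "card J0 \<le> Suc 0" by simp
    show False
    proof (cases "J0 = {}")
      case True
      have "(X - {i}) \<union> J0 = X - {i}" "(Y - J0) \<union> {i} = insert i Y" using True by auto
      then show False using J0(2) V0 by simp
    next
      case False
      then obtain j where j: "j \<in> J0" by auto
      then have "J0 = {j}" using c1 card_le_Suc0_iff_eq[OF finJ0] by auto
      moreover have "j \<in> Y - X" using j J0(1) by auto
      moreover have "(X - {i}) \<union> {j} = insert j (X - {i})" by auto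
      moreover have "(Y - {j}) \<union> {i} = insert i Y - {j}" using iP \<open>j \<in> Y - X\<close> by auto
      ultimately show False using J0(2) Vj by auto
    qed
  qed
  consider (a) "card (Y - X) \<le> 1" | (b) "card (Y - X) = 2" | (c) "3 \<le> card (Y - X)" by linarith
  then show False
  proof cases
    case a
    have "card J0 \<le> card (Y - X)" using J0(1) finY by (intro card_mono) auto
    then show False using a J0c by simp
  next
    case b
    have "card J0 \<le> card (Y - X)" using J0(1) finY by (intro card_mono) auto
    then have J0Q: "J0 = Y - X"
      using J0(1) J0c b finY by (intro card_subset_eq) auto
    obtain j k where jk: "Y - X = {j, k}" "j \<noteq> k" using b card_2_iff by metis
    have jQ: "j \<in> Y - X" and kQ: "k \<in> Y - X" using jk by auto
    show False
    proof (cases "X - Y = {i}")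
      case True
      obtain K where K: "K \<subseteq> X - Y" "f Y + f X \<le> f ((Y - {j}) \<union> K) + f ((X - K) \<union> {j})"
        using mmX[OF YN XN, of "{j}"] jQ by auto
      have "K = {} \<or> K = {i}" using K(1) True by auto
      then show False
      proof
        assume K0: "K = {}"
        have "(Y - {j}) \<union> K = insert k (X - {i})" using K0 True jk by auto
        moreover have "(X - K) \<union> {j} = insert i Y - {k}" using K0 True jk iP by auto
        ultimately show False using K(2) Vj[OF kQ] by (simp add: add.commute)
      next
        assume Ki: "K = {i}"
        have "(Y - {j}) \<union> K = insert i Y - {j}" using Ki iP jQ by auto
        moreover have "(X - K) \<union> {j} = insert j (X - {i})" using Ki by auto
        ultimately show False using K(2) Vj[OF jQ] by (simp add: add.commute)
      qed
    next
      case False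
      then obtain u where u: "u \<in> X - Y" "u \<noteq> i" using iP by auto
      have P2: "2 \<le> card (X - Y)"
      proof -
        have "{i, u} \<subseteq> X - Y" using u iP by auto
        then have "card {i, u} \<le> card (X - Y)" using finX by (intro card_mono) auto
        moreover have "card {i, u} = 2" using u by auto
        ultimately show ?thesis by simp
      qed
      define Z where "Z = (X - {i}) \<union> (Y - X)"
      define W where "W = (Y - (Y - X)) \<union> {i}"
      have s0: "f X + f Y \<le> f Z + f W" using J0(2) unfolding J0Q Z_def W_def .
      have ZN: "Z \<subseteq> N" using Z_def XN YN by auto
      have WN: "W \<subseteq> N" using W_def XN YN iP by auto
      have jZ: "j \<in> Z - X" using jQ Z_def by auto
      have ZX: "Z - X = {j, k}" using Z_def jk by auto
      have XZ: "X - Z = {i}" using Z_def iP by auto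
      have "card (Z - X) + card (X - Z) = 3" using ZX XZ jk by simp
      then have exZ: "exc f Z X j" using IH[OF ZN XN jZ] P2 b by simp
      define I where "I = X - Y - {i}"
      from exZ consider (a) "f Z + f X \<le> f (Z - {j}) + f (insert j X)"
        | (b') "f Z + f X \<le> f (insert i (Z - {j})) + f (insert j X - {i})"
        unfolding exc_def XZ by auto
      then show False
      proof cases
        case a
        have jXN: "insert j X \<subseteq> N" using XN YN jQ by auto
        have IW: "I \<subseteq> insert j X - W" using I_def W_def by auto
        obtain J' where J': "J' \<subseteq> W - insert j X"
          "f (insert j X) + f W \<le> f ((insert j X - I) \<union> J') + f ((W - J') \<union> I)"
          using mmX[OF jXN WN IW] by auto
        have "J' = {}" using J'(1) W_def iP by auto
        moreover have "insert j X - I = insert i Y - {k}" using I_def jk iP by auto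
        moreover have "W \<union> I = X" using W_def I_def iP by auto
        ultimately have n2: "f (insert j X) + f W \<le> f (insert i Y - {k}) + f X" using J'(2) by simp
        have n1: "f Z + f X \<le> f (insert j X) + f (Z - {j})" using a by (simp add: add.commute)
        have "f X + f Y \<le> f (insert i Y - {k}) + f (Z - {j})"
          by (rule E_chain[OF s0 n1 n2 fXm fXi])
        moreover have "Z - {j} = insert k (X - {i})" using Z_def jk by auto
        ultimately show False using Vj[OF kQ] by (simp add: add.commute)
      next
        case b'
        define B where "B = insert i (Z - {j})"
        have BN: "B \<subseteq> N" using B_def ZN iP XN by auto
        have IW: "I \<subseteq> B - W" using I_def W_def B_def Z_def jQ by auto
        obtain J' where J': "J' \<subseteq> W - B"
          "f B + f W \<le> f ((B - I) \<union> J') + f ((W - J') \<union> I)"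
          using mmX[OF BN WN IW] by auto
        have "J' = {}" using J'(1) W_def B_def Z_def iP jQ by auto
        moreover have "B - I = insert i Y - {j}" using I_def B_def Z_def jk iP by auto
        moreover have "W \<union> I = X" using W_def I_def iP by auto
        ultimately have n2: "f B + f W \<le> f (insert i Y - {j}) + f X" using J'(2) by simp
        have n1: "f Z + f X \<le> f B + f (insert j X - {i})" using b' B_def by simp
        have "f X + f Y \<le> f (insert i Y - {j}) + f (insert j X - {i})"
          by (rule E_chain[OF s0 n1 n2 fXm fXi])
        moreover have "insert j X - {i} = insert j (X - {i})" using jQ iP by auto
        ultimately show False using Vj[OF jQ] by (simp add: add.commute)
      qed
    qed
  next
    case c
    show False by (rule case3[OF fin val bn mm XN YN iP IH V0 Vj fXm fYm c])
  qed
qed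

lemma all_exc:
  fixes f :: "'a set \<Rightarrow> ereal"
  assumes fin: "finite N" and val: "valued_on N f" and bn: "B_nat_EXC (dom_f N f)"
    and mm: "M_nat_EXC_m N f"
  shows "X \<subseteq> N \<Longrightarrow> Y \<subseteq> N \<Longrightarrow> i \<in> X - Y \<Longrightarrow> exc f X Y i"
proof (induction "card (X - Y) + card (Y - X)" arbitrary: X Y i rule: less_induct)
  case less
  show ?case
    by (rule step[OF fin val bn mm less.prems]) (rule less.hyps; assumption)
qed

theorem proposition4:
  fixes N :: "'a set" and f :: "'a set \<Rightarrow> ereal"
  assumes "finite N"
    and "valued_on N f"
    and "dom_f N f \<noteq> {}"
    and "B_nat_EXC (dom_f N f)"
    and "M_nat_EXC_m N f"
  shows "M_nat_EXC N f"
  unfolding M_nat_EXC_def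
proof (intro allI impI ballI)
  fix X Y i assume XN: "X \<subseteq> N" and YN: "Y \<subseteq> N" and iP: "i \<in> X - Y"
  have "exc f X Y i" using all_exc[OF assms(1,2,4,5) XN YN iP] .
  then show "f X + f Y \<le> max (f (X - {i}) + f (insert i Y))
                         (SUP j\<in>Y - X. f (insert j (X - {i})) + f (insert i Y - {j}))"
  proof (unfold exc_def, elim disjE bexE)
    assume "f X + f Y \<le> f (X - {i}) + f (insert i Y)"
    then show ?thesis by (simp add: le_max_iff_disj)
  next
    fix j assume j: "j \<in> Y - X" "f X + f Y \<le> f (insert j (X - {i})) + f (insert i Y - {j})"
    have "f (insert j (X - {i})) + f (insert i Y - {j})
          \<le> (SUP j\<in>Y - X. f (insert j (X - {i})) + f (insert i Y - {j}))"
      using j(1) by (rule SUP_upper)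
    with j(2) have "f X + f Y \<le> (SUP j\<in>Y - X. f (insert j (X - {i})) + f (insert i Y - {j}))"
      by (rule order_trans)
    then show ?thesis by (simp add: le_max_iff_disj)
  qed
qed

end
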